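(* For every $1\leq p <\infty$, $B^{p}$ is a Banach space.
   Context: Let $\mathcal{B}$ be the Borel $\sigma$-algebra of $\mathbb{R}$, $\lambda$ the Lebesgue measure, and $\mathcal{B}_{\infty}$ the $\sigma$-algebra on $\mathbb{R}^{\mathbb{N}}$ generated by the cylinder sets $\prod_{i=1}^{m}C_{i}\times\prod_{i=m+1}^{\infty}\mathbb{R}$ with $C_i\in\mathcal{B}$, $m\in\mathbb{N}$. Let $\mathcal{F}(\mathcal{B},\lambda)$ be the set of finite rectangles $\prod_{i\in\mathbb{N}}C_{i}$ with $C_i\in\mathcal{B}$ and $\prod_{i}\lambda(C_i)\in[0,\infty)$, with $\mathrm{vol}(\prod_{i}C_i):=\prod_i\lambda(C_i)$. The measure $\mu$ is the restriction to $\mathcal{B}_{\infty}$ of the outer measure $\mu^{\ast}(A):=\inf\{\sum_{n}\mathrm{vol}(\mathscr{C}_{n}) : \mathscr{C}_{n}\in\mathcal{F}(\mathcal{B},\lambda),\ A\subset\bigcup_{n}\mathscr{C}_{n}\}$ ($\inf\varnothing=\infty$). Let $I:=\mathbb{Z}^{\mathbb{N}}$ and, for $\mathfrak{a}=(a_n)\in I$, $\mathcal{C}_{\mathfrak{a}}:=\prod_{n\in\mathbb{N}}[a_{n},a_{n}+1)$. Define $B^{p}:=\{f\in L^{p}(\mu) : \int_{\mathcal{C}_{\mathfrak{a}}}|f|^{p}\,d\mu=0 \text{ for each } \mathfrak{a}\in I\}$, with the $L^p(\mu)$ norm. *)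

theory Defs
  imports "HOL-Analysis.Analysis"
begin

definition cylinders :: "(nat \<Rightarrow> real) set set" where
  "cylinders = {{x. \<forall>i<m. x i \<in> C i} | m C. \<forall>i<m. C i \<in> sets borel}"

definition B_inf :: "(nat \<Rightarrow> real) set set" where
  "B_inf = sigma_sets UNIV cylinders"

definition partial_vol :: "(nat \<Rightarrow> real set) \<Rightarrow> nat \<Rightarrow> ennreal" where
  "partial_vol C n = (\<Prod>i<n. emeasure lborel (C i))"

definition finite_rect :: "(nat \<Rightarrow> real set) \<Rightarrow> bool" where
  "finite_rect C \<longleftrightarrow> (\<forall>i. C i \<in> sets borel) \<and>
      (\<exists>v::real. 0 \<le> v \<and> partial_vol C \<longlonglongrightarrow> ennreal v)"

definition vol :: "(nat \<Rightarrow> real set) \<Rightarrow> ennreal" where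
  "vol C = lim (partial_vol C)"

text \<open>Outer measure (Inf of the empty set is \<infinity>).\<close>
definition mu_outer :: "(nat \<Rightarrow> real) set \<Rightarrow> ennreal" where
  "mu_outer A = Inf {(\<Sum>n. vol (R n)) | R. (\<forall>n. finite_rect (R n)) \<and>
                       A \<subseteq> (\<Union>n. Pi UNIV (R n))}"

definition mu :: "(nat \<Rightarrow> real) measure" where
  "mu = measure_of UNIV B_inf mu_outer"

definition cube :: "(nat \<Rightarrow> int) \<Rightarrow> (nat \<Rightarrow> real) set" where
  "cube a = Pi UNIV (\<lambda>n. {real_of_int (a n) ..< real_of_int (a n) + 1})"

definition Lp :: "real \<Rightarrow> ((nat \<Rightarrow> real) \<Rightarrow> real) set" where
  "Lp p = {f. f \<in> borel_measurable mu \<and> (\<integral>\<^sup>+ x. ennreal (\<bar>f x\<bar> powr p) \<partial>mu) < \<infinity>}"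

definition Lp_norm :: "real \<Rightarrow> ((nat \<Rightarrow> real) \<Rightarrow> real) \<Rightarrow> real" where
  "Lp_norm p f = (enn2real (\<integral>\<^sup>+ x. ennreal (\<bar>f x\<bar> powr p) \<partial>mu)) powr (1 / p)"

definition Bp :: "real \<Rightarrow> ((nat \<Rightarrow> real) \<Rightarrow> real) set" where
  "Bp p = {f \<in> Lp p. \<forall>a. (\<integral>\<^sup>+ x \<in> cube a. ennreal (\<bar>f x\<bar> powr p) \<partial>mu) = 0}"

text \<open>V (a set of functions, identified modulo mu-a.e. equality) with the seminorm N
  is a Banach space: a linear subspace, N is a seminorm vanishing exactly on
  a.e.-zero functions (so a norm on the quotient), and V is complete.\<close>
definition is_Banach :: "((nat \<Rightarrow> real) \<Rightarrow> real) set \<Rightarrow> (((nat \<Rightarrow> real) \<Rightarrow> real) \<Rightarrow> real) \<Rightarrow> bool" where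
  "is_Banach V N \<longleftrightarrow>
     (\<lambda>x. 0) \<in> V \<and>
     (\<forall>f\<in>V. \<forall>g\<in>V. (\<lambda>x. f x + g x) \<in> V) \<and>
     (\<forall>c. \<forall>f\<in>V. (\<lambda>x. c * f x) \<in> V) \<and>
     (\<forall>f\<in>V. 0 \<le> N f \<and> (N f = 0 \<longleftrightarrow> (AE x in mu. f x = 0))) \<and>
     (\<forall>f\<in>V. \<forall>g\<in>V. N (\<lambda>x. f x + g x) \<le> N f + N g) \<and>
     (\<forall>c. \<forall>f\<in>V. N (\<lambda>x. c * f x) = \<bar>c\<bar> * N f) \<and>
     (\<forall>F. (\<forall>n. F n \<in> V) \<and>
          (\<forall>e>0. \<exists>M. \<forall>m\<ge>M. \<forall>n\<ge>M. N (\<lambda>x. F m x - F n x) < e)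
          \<longrightarrow> (\<exists>g\<in>V. (\<lambda>n. N (\<lambda>x. F n x - g x)) \<longlonglongrightarrow> 0))"

end

theory Submission
  imports Defs
begin

lemma powr_convex0:
  fixes x y t p :: real
  assumes "0 \<le> x" "0 \<le> y" "0 \<le> t" "t \<le> 1" "1 \<le> p"
  shows "(t*x + (1-t)*y) powr p \<le> t * x powr p + (1-t) * y powr p"
proof -
  have aux: "(s*z) powr p \<le> s * z powr p" if "0 \<le> s" "s \<le> 1" "0 \<le> z" for s z :: real
  proof -
    have "s powr p \<le> s powr 1"
      using powr_mono'[of 1 p s] that assms by simp
    then have "s powr p \<le> s" using that by simp
    then show ?thesis using that by (simp add: powr_mult mult_right_mono)
  qed
  show ?thesis
  proof (cases "x = 0 \<or> y = 0 \<or> t = 0 \<or> t = 1")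
    case True
    then show ?thesis using aux[of t x] aux[of "1-t" y] assms by auto
  next
    case False
    then have "x > 0" "y > 0" "0 < t" "t < 1" using assms by auto
    then show ?thesis using powr_convex[OF assms(5)] unfolding convex_on_def
      by (auto simp: )
  qed
qed

definition Ip :: "real \<Rightarrow> ((nat\<Rightarrow>real)\<Rightarrow>real) \<Rightarrow> ennreal" where
  "Ip p f = (\<integral>\<^sup>+x. ennreal (\<bar>f x\<bar> powr p) \<partial>mu)"

lemma Lp_iff: "f \<in> Lp p \<longleftrightarrow> f \<in> borel_measurable mu \<and> Ip p f < \<infinity>"
  by (simp add: Lp_def Ip_def)

lemma Lp_norm_Ip: "Lp_norm p f = enn2real (Ip p f) powr (1/p)"
  by (simp add: Lp_norm_def Ip_def)

lemma Lp_norm_nonneg: "0 \<le> Lp_norm p f"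
  by (simp add: Lp_norm_Ip)

lemma Ip_norm:
  assumes "f \<in> Lp p" "0 < p"
  shows "Ip p f = ennreal (Lp_norm p f powr p)"
proof -
  have fin: "Ip p f < \<infinity>" using assms Lp_iff by blast
  have "Lp_norm p f powr p = enn2real (Ip p f)"
    using assms by (simp add: Lp_norm_Ip powr_powr)
  then show ?thesis using fin by (simp add: ennreal_enn2real_if)
qed

lemma pw_add_bound:
  fixes a b p :: real assumes "0 < p"
  shows "\<bar>a+b\<bar> powr p \<le> 2 powr p * (\<bar>a\<bar> powr p + \<bar>b\<bar> powr p)"
proof -
  have "\<bar>a+b\<bar> \<le> 2 * max \<bar>a\<bar> \<bar>b\<bar>" by auto
  then have "\<bar>a+b\<bar> powr p \<le> (2 * max \<bar>a\<bar> \<bar>b\<bar>) powr p"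
    using assms by (intro powr_mono2) auto
  also have "\<dots> = 2 powr p * (max \<bar>a\<bar> \<bar>b\<bar>) powr p" by (simp add: powr_mult)
  also have "(max \<bar>a\<bar> \<bar>b\<bar>) powr p \<le> \<bar>a\<bar> powr p + \<bar>b\<bar> powr p"
    by (cases "\<bar>a\<bar> \<le> \<bar>b\<bar>") (auto simp: max_def)
  finally show ?thesis by (simp add: mult_left_mono)
qed

lemma Lp_add:
  assumes "f \<in> Lp p" "g \<in> Lp p" "0 < p"
  shows "(\<lambda>x. f x + g x) \<in> Lp p"
proof -
  have [measurable]: "f \<in> borel_measurable mu" "g \<in> borel_measurable mu"
    using assms Lp_iff by auto
  have "Ip p (\<lambda>x. f x + g x) \<le> (\<integral>\<^sup>+x. ennreal (2 powr p) * ennreal (\<bar>f x\<bar> powr p)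
        + ennreal (2 powr p) * ennreal (\<bar>g x\<bar> powr p) \<partial>mu)"
    unfolding Ip_def
    by (intro nn_integral_mono)
       (auto simp: ennreal_mult'[symmetric] ennreal_plus[symmetric] distrib_left[symmetric]
             intro!: ennreal_leI pw_add_bound assms)
  also have "\<dots> = ennreal (2 powr p) * Ip p f + ennreal (2 powr p) * Ip p g"
    unfolding Ip_def by (subst nn_integral_add) (auto simp: nn_integral_cmult)
  also have "\<dots> < \<infinity>" using assms Lp_iff by (simp add: ennreal_mult_less_top)
  finally show ?thesis using Lp_iff by auto
qed

lemma Ip_scale:
  assumes "0 < p" and [measurable]: "f \<in> borel_measurable mu"
  shows "Ip p (\<lambda>x. c * f x) = ennreal (\<bar>c\<bar> powr p) * Ip p f"
  unfolding Ip_def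
  by (subst nn_integral_cmult[symmetric]) (auto simp: abs_mult powr_mult ennreal_mult')

lemma Lp_scale:
  assumes "f \<in> Lp p" "0 < p"
  shows "(\<lambda>x. c * f x) \<in> Lp p"
  using assms Ip_scale[of p f c] by (auto simp: Lp_iff ennreal_mult_less_top)

lemma Lp_norm_scale:
  assumes "f \<in> Lp p" "0 < p"
  shows "Lp_norm p (\<lambda>x. c * f x) = \<bar>c\<bar> * Lp_norm p f"
proof -
  have "enn2real (Ip p (\<lambda>x. c * f x)) = \<bar>c\<bar> powr p * enn2real (Ip p f)"
    using Ip_scale[OF assms(2), of f c] assms by (simp add: enn2real_mult Lp_iff)
  then show ?thesis using assms
    by (simp add: Lp_norm_Ip powr_mult powr_powr)
qed

lemma Lp_norm_zero:
  assumes "f \<in> Lp p" "0 < p"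
  shows "Lp_norm p f = 0 \<longleftrightarrow> (AE x in mu. f x = 0)"
proof -
  have [measurable]: "f \<in> borel_measurable mu" using assms Lp_iff by auto
  have fin: "Ip p f < \<infinity>" using assms Lp_iff by blast
  have "Lp_norm p f = 0 \<longleftrightarrow> Ip p f = 0"
    using fin by (auto simp: Lp_norm_Ip enn2real_eq_0_iff)
  also have "\<dots> \<longleftrightarrow> (AE x in mu. ennreal (\<bar>f x\<bar> powr p) = 0)"
    unfolding Ip_def by (rule nn_integral_0_iff_AE) measurable
  also have "\<dots> \<longleftrightarrow> (AE x in mu. f x = 0)"
    by (intro AE_cong) auto
  finally show ?thesis .
qed

lemma pw_mink:
  fixes a b A B p :: real
  assumes "0 < A" "0 < B" "1 \<le> p"
  shows "\<bar>a+b\<bar> powr p \<le> ((A+B) powr p * (A/(A+B)) / A powr p) * \<bar>a\<bar> powr p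
                         + ((A+B) powr p * (B/(A+B)) / B powr p) * \<bar>b\<bar> powr p"
proof -
  define t where "t = A/(A+B)"
  have t: "0 \<le> t" "t \<le> 1" "1 - t = B/(A+B)" using assms by (auto simp: t_def field_simps)
  have e1: "t*(\<bar>a\<bar>/A) = \<bar>a\<bar>/(A+B)" using assms by (simp add: t_def)
  have e2: "(1-t)*(\<bar>b\<bar>/B) = \<bar>b\<bar>/(A+B)" using assms t(3) by simp
  have eq: "\<bar>a\<bar> + \<bar>b\<bar> = (A+B) * (t*(\<bar>a\<bar>/A) + (1-t)*(\<bar>b\<bar>/B))"
    using assms unfolding e1 e2 by (simp add: add_divide_distrib[symmetric])
  have "\<bar>a+b\<bar> powr p \<le> (\<bar>a\<bar> + \<bar>b\<bar>) powr p"
    using assms by (intro powr_mono2) auto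
  also have "\<dots> = (A+B) powr p * (t*(\<bar>a\<bar>/A) + (1-t)*(\<bar>b\<bar>/B)) powr p"
    using assms t by (simp add: eq powr_mult)
  also have "\<dots> \<le> (A+B) powr p * (t*(\<bar>a\<bar>/A) powr p + (1-t)*(\<bar>b\<bar>/B) powr p)"
    using assms t by (intro mult_left_mono powr_convex0) auto
  also have "\<dots> = ((A+B) powr p * (A/(A+B)) / A powr p) * \<bar>a\<bar> powr p
                         + ((A+B) powr p * (B/(A+B)) / B powr p) * \<bar>b\<bar> powr p"
    using assms by (simp only: t(3)) (simp add: t_def powr_divide distrib_left)
  finally show ?thesis .
qed

lemma Lp_norm_AE_cong:
  assumes "AE x in mu. f x = g x"
  shows "Lp_norm p f = Lp_norm p g"
proof -
  have "Ip p f = Ip p g" unfolding Ip_def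
    by (rule nn_integral_cong_AE) (use assms in auto)
  then show ?thesis by (simp add: Lp_norm_Ip)
qed

lemma minkowski:
  assumes f: "f \<in> Lp p" and g: "g \<in> Lp p" and p: "1 \<le> p"
  shows "Lp_norm p (\<lambda>x. f x + g x) \<le> Lp_norm p f + Lp_norm p g"
proof -
  have p0: "0 < p" using p by auto
  have [measurable]: "f \<in> borel_measurable mu" "g \<in> borel_measurable mu"
    using assms Lp_iff by auto
  define A where "A = Lp_norm p f"
  define B where "B = Lp_norm p g"
  have A0: "0 \<le> A" and B0: "0 \<le> B" by (auto simp: A_def B_def Lp_norm_nonneg)
  show ?thesis
  proof (cases "A = 0 \<or> B = 0")
    case True
    then show ?thesis
    proof
      assume "A = 0"
      then have "AE x in mu. f x = 0" using Lp_norm_zero[OF f p0] A_def by auto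
      then have "AE x in mu. f x + g x = g x" by auto
      then show ?thesis using Lp_norm_AE_cong[of "\<lambda>x. f x + g x" g p] A0 A_def by auto
    next
      assume "B = 0"
      then have "AE x in mu. g x = 0" using Lp_norm_zero[OF g p0] B_def by auto
      then have "AE x in mu. f x + g x = f x" by auto
      then show ?thesis using Lp_norm_AE_cong[of "\<lambda>x. f x + g x" f p] B0 B_def by auto
    qed
  next
    case False
    then have Ap: "0 < A" and Bp: "0 < B" using A0 B0 by auto
    define c1 where "c1 = (A+B) powr p * (A/(A+B)) / A powr p"
    define c2 where "c2 = (A+B) powr p * (B/(A+B)) / B powr p"
    have c: "0 \<le> c1" "0 \<le> c2" using Ap Bp by (auto simp: c1_def c2_def)
    have "Ip p (\<lambda>x. f x + g x) \<le> (\<integral>\<^sup>+x. ennreal c1 * ennreal (\<bar>f x\<bar> powr p)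
        + ennreal c2 * ennreal (\<bar>g x\<bar> powr p) \<partial>mu)"
      unfolding Ip_def
    proof (intro nn_integral_mono)
      fix x
      have "\<bar>f x + g x\<bar> powr p \<le> c1 * \<bar>f x\<bar> powr p + c2 * \<bar>g x\<bar> powr p"
        using pw_mink[OF Ap Bp p] unfolding c1_def c2_def by blast
      then show "ennreal (\<bar>f x + g x\<bar> powr p) \<le> ennreal c1 * ennreal (\<bar>f x\<bar> powr p)
        + ennreal c2 * ennreal (\<bar>g x\<bar> powr p)"
        using c by (simp add: ennreal_mult[symmetric] ennreal_plus[symmetric] ennreal_leI del: ennreal_plus)
    qed
    also have "\<dots> = ennreal c1 * Ip p f + ennreal c2 * Ip p g"
      unfolding Ip_def by (subst nn_integral_add) (auto simp: nn_integral_cmult)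
    also have "\<dots> = ennreal (c1 * A powr p + c2 * B powr p)"
      using Ip_norm[OF f p0] Ip_norm[OF g p0] c
      by (simp add: A_def B_def ennreal_plus ennreal_mult)
    also have "c1 * A powr p + c2 * B powr p = (A+B) powr p"
    proof -
      have "c1 * A powr p = (A+B) powr p * (A/(A+B))" using Ap by (simp add: c1_def)
      moreover have "c2 * B powr p = (A+B) powr p * (B/(A+B))" using Bp by (simp add: c2_def)
      moreover have "A/(A+B) + B/(A+B) = 1" using Ap Bp by (simp add: add_divide_distrib[symmetric])
      ultimately show ?thesis by (metis distrib_left mult.right_neutral)
    qed
    finally have le: "Ip p (\<lambda>x. f x + g x) \<le> ennreal ((A+B) powr p)" .
    have "enn2real (Ip p (\<lambda>x. f x + g x)) \<le> (A+B) powr p"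
      using le by (simp add: enn2real_leI)
    then have "Lp_norm p (\<lambda>x. f x + g x) \<le> ((A+B) powr p) powr (1/p)"
      unfolding Lp_norm_Ip using p0 by (intro powr_mono2) auto
    also have "\<dots> = A + B" using p0 Ap Bp by (simp add: powr_powr)
    finally show ?thesis by (simp add: A_def B_def)
  qed
qed

lemma sets_mu: "sets mu = B_inf" and space_mu: "space mu = UNIV"
proof -
  have "cylinders \<subseteq> Pow UNIV" by auto
  then show "sets mu = B_inf" unfolding mu_def B_inf_def
    by (simp add: sets_measure_of sigma_sets_sigma_sets_eq)
  show "space mu = UNIV" unfolding mu_def by (simp add: space_measure_of_conv)
qed

lemma cyl_mu: "(\<forall>i<m. C i \<in> sets borel) \<Longrightarrow> {x. \<forall>i<m. x i \<in> C i} \<in> sets mu"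
  unfolding sets_mu B_inf_def cylinders_def
  by (rule sigma_sets.Basic) blast

lemma cube_meas: "cube a \<in> sets mu"
proof -
  define C where "C i = {real_of_int (a i) ..< real_of_int (a i) + 1}" for i
  have "cube a = (\<Inter>m. {x. \<forall>i<m. x i \<in> C i})"
    unfolding cube_def C_def by auto (meson lessI)+
  also have "\<dots> \<in> sets mu"
  proof -
    have "{x. \<forall>i<m. x i \<in> C i} \<in> sets mu" for m by (rule cyl_mu) (auto simp: C_def)
    then show ?thesis by (intro sets.countable_INT') auto
  qed
  finally show ?thesis .
qed

lemma Bp_iff:
  assumes "0 < p"
  shows "f \<in> Bp p \<longleftrightarrow> f \<in> Lp p \<and> (\<forall>a. AE x in mu. x \<in> cube a \<longrightarrow> f x = 0)"
proof (cases "f \<in> Lp p")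
  case True
  then have [measurable]: "f \<in> borel_measurable mu" using Lp_iff by auto
  have [measurable]: "cube a \<in> sets mu" for a by (rule cube_meas)
  have "(\<integral>\<^sup>+ x \<in> cube a. ennreal (\<bar>f x\<bar> powr p) \<partial>mu) = 0 \<longleftrightarrow>
        (AE x in mu. x \<in> cube a \<longrightarrow> f x = 0)" for a
    by (subst nn_integral_0_iff_AE) (auto simp: indicator_def intro!: AE_cong)
  then show ?thesis using True by (simp add: Bp_def)
qed (simp add: Bp_def)

lemma Lp_diff:
  assumes "f \<in> Lp p" "g \<in> Lp p" "0 < p"
  shows "(\<lambda>x. f x - g x) \<in> Lp p"
proof -
  have "(\<lambda>x. f x + (-1) * g x) \<in> Lp p" using assms by (intro Lp_add Lp_scale)
  then show ?thesis by simp
qed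

lemma fatou_bound:
  assumes p: "0 < p"
    and meas[measurable]: "\<And>k. h k \<in> borel_measurable mu" "f \<in> borel_measurable mu"
    and conv: "AE x in mu. (\<lambda>k. h k x) \<longlonglongrightarrow> f x"
    and ev: "eventually (\<lambda>k. Ip p (h k) \<le> c) sequentially"
  shows "Ip p f \<le> c"
proof -
  have "Ip p f = (\<integral>\<^sup>+x. liminf (\<lambda>k. ennreal (\<bar>h k x\<bar> powr p)) \<partial>mu)"
    unfolding Ip_def
  proof (rule nn_integral_cong_AE)
    show "AE x in mu. ennreal (\<bar>f x\<bar> powr p) = liminf (\<lambda>k. ennreal (\<bar>h k x\<bar> powr p))"
      using conv
    proof eventually_elim
      case (elim x)
      have "(\<lambda>k. \<bar>h k x\<bar> powr p) \<longlonglongrightarrow> \<bar>f x\<bar> powr p"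
        using p by (intro tendsto_powr' tendsto_rabs elim tendsto_const) auto
      then have "(\<lambda>k. ennreal (\<bar>h k x\<bar> powr p)) \<longlonglongrightarrow> ennreal (\<bar>f x\<bar> powr p)"
        by (rule tendsto_ennrealI)
      then show ?case by (metis lim_imp_Liminf trivial_limit_sequentially)
    qed
  qed
  also have "\<dots> \<le> liminf (\<lambda>k. Ip p (h k))"
    unfolding Ip_def by (rule nn_integral_liminf) measurable
  also have "\<dots> \<le> limsup (\<lambda>k. Ip p (h k))"
    by (rule Liminf_le_Limsup) simp
  also have "\<dots> \<le> c" using ev by (rule Limsup_bounded)
  finally show ?thesis .
qed

lemma complete:
  assumes p: "1 \<le> p"
    and F: "\<And>n. F n \<in> Bp p"
    and C: "\<And>e. e > 0 \<Longrightarrow> \<exists>M. \<forall>m\<ge>M. \<forall>n\<ge>M. Lp_norm p (\<lambda>x. F m x - F n x) < e"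
  shows "\<exists>g\<in>Bp p. (\<lambda>n. Lp_norm p (\<lambda>x. F n x - g x)) \<longlonglongrightarrow> 0"
proof -
  have p0: "0 < p" using p by auto
  have FL: "F n \<in> Lp p" for n using F Bp_def by auto
  have [measurable]: "F n \<in> borel_measurable mu" for n using FL Lp_iff by auto
  have DL: "(\<lambda>x. F m x - F n x) \<in> Lp p" for m n by (intro Lp_diff FL p0)
  have "\<forall>k. \<exists>Mk. \<forall>m\<ge>Mk. \<forall>n\<ge>Mk. Lp_norm p (\<lambda>x. F m x - F n x) < (1/4::real)^k"
  proof
    fix k :: nat
    show "\<exists>Mk. \<forall>m\<ge>Mk. \<forall>n\<ge>Mk. Lp_norm p (\<lambda>x. F m x - F n x) < (1/4::real)^k"
      by (rule C) simp
  qed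
  then have "\<exists>M. \<forall>k. \<forall>m\<ge>M k. \<forall>n\<ge>M k. Lp_norm p (\<lambda>x. F m x - F n x) < (1/4::real)^k"
    by (rule choice)
  then obtain M where M0: "\<forall>k. \<forall>m\<ge>M k. \<forall>n\<ge>M k. Lp_norm p (\<lambda>x. F m x - F n x) < (1/4::real)^k"
    by blast
  have M: "\<And>k m n. m \<ge> M k \<Longrightarrow> n \<ge> M k \<Longrightarrow> Lp_norm p (\<lambda>x. F m x - F n x) < (1/4)^k"
    using M0 by blast
  define r where "r = rec_nat (M 0) (\<lambda>k rk. max (Suc rk) (M (Suc k)))"
  have r0: "r 0 = M 0" and rS: "r (Suc k) = max (Suc (r k)) (M (Suc k))" for k
    by (simp_all add: r_def)
  have rM: "M k \<le> r k" for k by (cases k) (auto simp: r0 rS)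
  have rmono: "strict_mono r" by (rule strict_mono_Suc_iff[THEN iffD2]) (auto simp: rS)
  have rge: "k \<le> r k" for k using rmono by (rule seq_suble)
  define d where "d k x = F (r (Suc k)) x - F (r k) x" for k x
  have [measurable]: "d k \<in> borel_measurable mu" for k unfolding d_def by measurable
  have dL: "d k \<in> Lp p" for k unfolding d_def by (rule DL)
  have dN: "Lp_norm p (d k) < (1/4)^k" for k
    unfolding d_def using rM[of k] rmono rS by (intro M) (auto simp: max_def)
  define A where "A k = {x \<in> space mu. (1/2)^k \<le> \<bar>d k x\<bar>}" for k
  have A_meas[measurable]: "A k \<in> sets mu" for k unfolding A_def by measurable
  have A_bound: "emeasure mu (A k) \<le> ennreal ((1/2)^k)" for k
  proof -
    have "emeasure mu (A k) = (\<integral>\<^sup>+x. indicator (A k) x \<partial>mu)" by simp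
    also have "\<dots> \<le> (\<integral>\<^sup>+x. ennreal ((2^k) powr p) * ennreal (\<bar>d k x\<bar> powr p) \<partial>mu)"
    proof (intro nn_integral_mono)
      fix x
      show "indicator (A k) x \<le> ennreal ((2^k) powr p) * ennreal (\<bar>d k x\<bar> powr p)"
      proof (cases "x \<in> A k")
        case True
        then have "(1/2)^k \<le> \<bar>d k x\<bar>" by (simp add: A_def)
        then have "1 \<le> 2^k * \<bar>d k x\<bar>" by (simp add: field_simps)
        then have "1 \<le> (2^k * \<bar>d k x\<bar>) powr p" using p0 by (intro ge_one_powr_ge_zero) auto
        then have "1 \<le> (2^k) powr p * \<bar>d k x\<bar> powr p" by (simp add: powr_mult)
        then show ?thesis using True
          by (simp add: ennreal_mult[symmetric] del: ennreal_mult' ennreal_1)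
      qed simp
    qed
    also have "\<dots> = ennreal ((2^k) powr p) * Ip p (d k)"
      unfolding Ip_def by (rule nn_integral_cmult) measurable
    also have "\<dots> = ennreal ((2^k) powr p * Lp_norm p (d k) powr p)"
      unfolding Ip_norm[OF dL p0] by (simp add: ennreal_mult)
    also have "\<dots> \<le> ennreal ((1/2)^k)"
    proof (rule ennreal_leI)
      have "(2^k) powr p * Lp_norm p (d k) powr p = (2^k * Lp_norm p (d k)) powr p"
        by (simp add: powr_mult Lp_norm_nonneg)
      also have "\<dots> \<le> (2^k * (1/4)^k) powr p"
        using dN[of k] p0 Lp_norm_nonneg[of p "d k"] by (intro powr_mono2) auto
      also have "(2::real)^k * (1/4)^k = (1/2)^k" by (simp add: power_mult_distrib[symmetric])
      also have "((1/2::real)^k) powr p \<le> ((1/2)^k) powr 1"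
        using p by (intro powr_mono') (auto simp: power_le_one)
      finally show "(2^k) powr p * Lp_norm p (d k) powr p \<le> (1/2)^k" by simp
    qed
    finally show ?thesis .
  qed
  have A_fin: "emeasure mu (A k) < \<infinity>" for k
    using A_bound[of k] by (auto simp: less_top[symmetric] top_unique)
  have A_sum: "summable (\<lambda>k. measure mu (A k))"
  proof (rule summable_comparison_test')
    show "summable (\<lambda>k. (1/2::real)^k)" by (simp add: summable_geometric)
    fix k :: nat
    show "norm (measure mu (A k)) \<le> (1/2)^k"
      using A_bound[of k] A_fin[of k]
      by (simp add: emeasure_eq_ennreal_measure ennreal_le_iff measure_nonneg)
  qed
  have "AE x in mu. eventually (\<lambda>k. x \<in> space mu - A k) sequentially"
    by (rule borel_cantelli_AE1[OF A_meas A_fin A_sum])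
  then have AEsum: "AE x in mu. summable (\<lambda>k. d k x)"
  proof eventually_elim
    case (elim x)
    then have "eventually (\<lambda>k. norm (d k x) \<le> (1/2)^k) sequentially"
      by eventually_elim (auto simp: A_def)
    then show ?case by (rule summable_comparison_test_ev) (simp add: summable_geometric)
  qed
  have tele: "F (r k) x = F (r 0) x + (\<Sum>i<k. d i x)" for k x
    by (induction k) (auto simp: d_def)
  define g where "g x = lim (\<lambda>k. F (r k) x)" for x
  have [measurable]: "g \<in> borel_measurable mu" unfolding g_def by measurable
  have conv: "AE x in mu. (\<lambda>k. F (r k) x) \<longlonglongrightarrow> g x"
    using AEsum
  proof eventually_elim
    case (elim x)
    then have "(\<lambda>k. F (r 0) x + (\<Sum>i<k. d i x)) \<longlonglongrightarrow> F (r 0) x + (\<Sum>i. d i x)"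
      by (intro tendsto_add tendsto_const summable_LIMSEQ)
    moreover have "(\<lambda>k. F (r k) x) = (\<lambda>k. F (r 0) x + (\<Sum>i<k. d i x))"
      by (rule ext) (rule tele)
    ultimately have "convergent (\<lambda>k. F (r k) x)" by (metis convergentI)
    then show ?case unfolding g_def by (rule convergent_LIMSEQ_iff[THEN iffD1])
  qed
  have bound: "Ip p (\<lambda>x. F n x - g x) \<le> ennreal (e powr p)"
    if "n \<ge> N" "\<forall>m\<ge>N. \<forall>n\<ge>N. Lp_norm p (\<lambda>x. F m x - F n x) < e" for n N e
  proof (rule fatou_bound[OF p0, where h = "\<lambda>k x. F n x - F (r k) x"])
    show "AE x in mu. (\<lambda>k. F n x - F (r k) x) \<longlonglongrightarrow> F n x - g x"
      using conv by eventually_elim (intro tendsto_diff tendsto_const)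
    show "eventually (\<lambda>k. Ip p (\<lambda>x. F n x - F (r k) x) \<le> ennreal (e powr p)) sequentially"
      unfolding eventually_sequentially
    proof (intro exI allI impI)
      fix k assume "N \<le> k"
      then have "N \<le> r k" using rge[of k] by linarith
      then have lt: "Lp_norm p (\<lambda>x. F n x - F (r k) x) < e" using that by blast
      show "Ip p (\<lambda>x. F n x - F (r k) x) \<le> ennreal (e powr p)"
        unfolding Ip_norm[OF DL p0]
        using lt p0 Lp_norm_nonneg by (intro ennreal_leI powr_mono2) auto
    qed
  qed measurable
  obtain N1 where N1: "\<forall>m\<ge>N1. \<forall>n\<ge>N1. Lp_norm p (\<lambda>x. F m x - F n x) < 1"
    using C[of 1] by auto
  have g1: "(\<lambda>x. F N1 x - g x) \<in> Lp p"
    using bound[OF order.refl N1] by (auto simp: Lp_iff ennreal_less_top order.strict_trans1)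
  have gL: "g \<in> Lp p"
  proof -
    have "(\<lambda>x. F N1 x - (F N1 x - g x)) \<in> Lp p" by (intro Lp_diff FL g1 p0)
    then show ?thesis by simp
  qed
  have gB: "g \<in> Bp p"
    unfolding Bp_iff[OF p0]
  proof (intro conjI gL allI)
    fix a
    have *: "\<forall>k. AE x in mu. x \<in> cube a \<longrightarrow> F (r k) x = 0"
      using F Bp_iff[OF p0] by blast
    have "AE x in mu. \<forall>k. (x \<in> cube a \<longrightarrow> F (r k) x = 0)"
      unfolding AE_all_countable by (rule *)
    then show "AE x in mu. x \<in> cube a \<longrightarrow> g x = 0"
      using conv
    proof eventually_elim
      case (elim x)
      show ?case
      proof
        assume "x \<in> cube a"
        then have "(\<lambda>k. F (r k) x) = (\<lambda>k. 0)" using elim by auto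
        then show "g x = 0" using elim(2) by (metis LIMSEQ_unique tendsto_const)
      qed
    qed
  qed
  have lim: "(\<lambda>n. Lp_norm p (\<lambda>x. F n x - g x)) \<longlonglongrightarrow> 0"
  proof (rule LIMSEQ_I)
    fix e :: real assume e: "0 < e"
    obtain N where N: "\<forall>m\<ge>N. \<forall>n\<ge>N. Lp_norm p (\<lambda>x. F m x - F n x) < e/2"
      using C[of "e/2"] e by auto
    have "norm (Lp_norm p (\<lambda>x. F n x - g x) - 0) < e" if "n \<ge> N" for n
    proof -
      have "Ip p (\<lambda>x. F n x - g x) \<le> ennreal ((e/2) powr p)" by (rule bound[OF that N])
      then have "enn2real (Ip p (\<lambda>x. F n x - g x)) \<le> (e/2) powr p"
        by (simp add: enn2real_leI)
      then have "Lp_norm p (\<lambda>x. F n x - g x) \<le> ((e/2) powr p) powr (1/p)"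
        unfolding Lp_norm_Ip using p0 by (intro powr_mono2) auto
      also have "\<dots> = e/2" using p0 e by (simp add: powr_powr)
      finally show ?thesis using e Lp_norm_nonneg[of p] by simp
    qed
    then show "\<exists>no. \<forall>n\<ge>no. norm (Lp_norm p (\<lambda>x. F n x - g x) - 0) < e" by blast
  qed
  show ?thesis using gB lim by blast
qed

theorem lemma3p5:
  fixes p :: real
  assumes "1 \<le> p"
  shows "is_Banach (Bp p) (Lp_norm p)"
proof -
  have p0: "0 < p" using assms by auto
  have BL: "f \<in> Bp p \<Longrightarrow> f \<in> Lp p" for f by (simp add: Bp_def)
  show ?thesis
    unfolding is_Banach_def
  proof (intro conjI ballI allI impI)
    show "(\<lambda>x. 0) \<in> Bp p"
      unfolding Bp_iff[OF p0] using p0 by (simp add: Lp_iff Ip_def)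
  next
    fix f g assume f: "f \<in> Bp p" and g: "g \<in> Bp p"
    show "(\<lambda>x. f x + g x) \<in> Bp p"
      using f g unfolding Bp_iff[OF p0]
    proof (intro conjI allI)
      show "(\<lambda>x. f x + g x) \<in> Lp p" using f g p0 BL by (intro Lp_add) auto
      fix a
      have "AE x in mu. x \<in> cube a \<longrightarrow> f x = 0" "AE x in mu. x \<in> cube a \<longrightarrow> g x = 0"
        using f g unfolding Bp_iff[OF p0] by auto
      then show "AE x in mu. x \<in> cube a \<longrightarrow> f x + g x = 0" by eventually_elim auto
    qed
    show "Lp_norm p (\<lambda>x. f x + g x) \<le> Lp_norm p f + Lp_norm p g"
      using f g BL assms by (intro minkowski) auto
  next
    fix c f assume f: "f \<in> Bp p"
    show "(\<lambda>x. c * f x) \<in> Bp p"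
      unfolding Bp_iff[OF p0]
    proof (intro conjI allI)
      show "(\<lambda>x. c * f x) \<in> Lp p" using f p0 BL by (intro Lp_scale) auto
      fix a
      have "AE x in mu. x \<in> cube a \<longrightarrow> f x = 0"
        using f unfolding Bp_iff[OF p0] by auto
      then show "AE x in mu. x \<in> cube a \<longrightarrow> c * f x = 0" by eventually_elim auto
    qed
    show "Lp_norm p (\<lambda>x. c * f x) = \<bar>c\<bar> * Lp_norm p f"
      using f BL p0 by (intro Lp_norm_scale) auto
  next
    fix f assume f: "f \<in> Bp p"
    show "0 \<le> Lp_norm p f" by (rule Lp_norm_nonneg)
    show "(Lp_norm p f = 0) = (AE x in mu. f x = 0)"
      using f BL p0 by (intro Lp_norm_zero) auto
  next
    fix F :: "nat \<Rightarrow> (nat \<Rightarrow> real) \<Rightarrow> real"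
    assume H: "(\<forall>n. F n \<in> Bp p) \<and>
          (\<forall>e>0. \<exists>M. \<forall>m\<ge>M. \<forall>n\<ge>M. Lp_norm p (\<lambda>x. F m x - F n x) < e)"
    show "\<exists>g\<in>Bp p. (\<lambda>n. Lp_norm p (\<lambda>x. F n x - g x)) \<longlonglongrightarrow> 0"
      using H by (intro complete assms) auto
  qed
qed

end
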